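(* Let $M$ be a connected matroid on $E$ and $S\subseteq E$ such that $M|_S$ is connected. Write $M/S=\bigoplus_i N_i$ where each $N_i$ is a connected matroid on a set $A_i$ (so the $A_i$ are the connected components of $M/S$). Then for each $i$, $M|_{A_i\cup S}$ is connected.
   Context: A matroid is connected if it is not a direct sum of two matroids on nonempty ground sets. $M|_S$ is the restriction to $S$ and $M/S$ is the contraction, the matroid on $E-S$ with $\mathrm{rk}_{M/S}(A)=\mathrm{rk}(A\cup S)-\mathrm{rk}(S)$. *)

theory Defs
  imports Main
begin

text \<open>A matroid on a finite ground set E, given by its rank function r
  (only the values on subsets of E matter).\<close>
definition matroid :: "'a set \<Rightarrow> ('a set \<Rightarrow> nat) \<Rightarrow> bool" where
  "matroid E r \<longleftrightarrow> finite E
     \<and> (\<forall>A. A \<subseteq> E \<longrightarrow> r A \<le> card A)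
     \<and> (\<forall>A B. A \<subseteq> B \<longrightarrow> B \<subseteq> E \<longrightarrow> r A \<le> r B)
     \<and> (\<forall>A B. A \<subseteq> E \<longrightarrow> B \<subseteq> E \<longrightarrow> r (A \<union> B) + r (A \<inter> B) \<le> r A + r B)"

text \<open>Restriction M|S is the matroid on S with the same rank function r.
  Contraction M/S is the matroid on E - S with rank A |-> r(A \<union> S) - r(S).\<close>
definition contract_rank :: "('a set \<Rightarrow> nat) \<Rightarrow> 'a set \<Rightarrow> 'a set \<Rightarrow> nat" where
  "contract_rank r S = (\<lambda>A. r (A \<union> S) - r S)"

definition direct_sum_split :: "'a set \<Rightarrow> ('a set \<Rightarrow> nat) \<Rightarrow> 'a set \<Rightarrow> 'a set \<Rightarrow> bool" where
  "direct_sum_split E r E1 E2 \<longleftrightarrow> E1 \<union> E2 = E \<and> E1 \<inter> E2 = {} \<and> E1 \<noteq> {} \<and> E2 \<noteq> {}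
     \<and> (\<forall>X. X \<subseteq> E \<longrightarrow> r X = r (X \<inter> E1) + r (X \<inter> E2))"

definition connected_matroid :: "'a set \<Rightarrow> ('a set \<Rightarrow> nat) \<Rightarrow> bool" where
  "connected_matroid E r \<longleftrightarrow> \<not> (\<exists>E1 E2. direct_sum_split E r E1 E2)"

end

theory Submission
  imports Defs
begin

lemma split_sym: "direct_sum_split E r E1 E2 \<Longrightarrow> direct_sum_split E r E2 E1"
  unfolding direct_sum_split_def by (auto simp: add.commute)

lemma S_side:
  assumes "direct_sum_split T r E1 E2" "S \<subseteq> T" "connected_matroid S r"
  shows "S \<subseteq> E1 \<or> S \<subseteq> E2"
proof (rule ccontr)
  assume "\<not> ?thesis"
  hence n1: "S \<inter> E1 \<noteq> {}" and n2: "S \<inter> E2 \<noteq> {}" using assms(1,2) unfolding direct_sum_split_def by blast+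
  have "direct_sum_split S r (S \<inter> E1) (S \<inter> E2)"
    unfolding direct_sum_split_def
  proof (intro conjI allI impI n1 n2)
    show "S \<inter> E1 \<union> S \<inter> E2 = S" "S \<inter> E1 \<inter> (S \<inter> E2) = {}" using assms(1,2) unfolding direct_sum_split_def by blast+
    fix X assume "X \<subseteq> S"
    moreover have "X \<inter> (S \<inter> E1) = X \<inter> E1" "X \<inter> (S \<inter> E2) = X \<inter> E2" using \<open>X \<subseteq> S\<close> by blast+
    ultimately show "r X = r (X \<inter> (S \<inter> E1)) + r (X \<inter> (S \<inter> E2))" using assms(1,2) unfolding direct_sum_split_def by auto
  qed
  thus False using assms(3) unfolding connected_matroid_def by blast
qed

lemma E1_is_S:
  assumes m: "matroid E r" and "S \<subseteq> E" and "A \<subseteq> E - S"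
    and conA: "connected_matroid A (contract_rank r S)"
    and sp: "direct_sum_split (A \<union> S) r E1 E2" and "S \<subseteq> E1"
  shows "E1 = S"
proof (rule ccontr)
  assume "E1 \<noteq> S"
  define A1 where "A1 = E1 - S"
  have A1ne: "A1 \<noteq> {}" using \<open>E1 \<noteq> S\<close> \<open>S \<subseteq> E1\<close> A1_def by blast
  have u: "E1 \<union> E2 = A \<union> S" and d: "E1 \<inter> E2 = {}" and E2ne: "E2 \<noteq> {}"
    and spl: "\<And>X. X \<subseteq> A \<union> S \<Longrightarrow> r X = r (X \<inter> E1) + r (X \<inter> E2)"
    using sp unfolding direct_sum_split_def by auto
  have mono: "\<And>X Y. X \<subseteq> Y \<Longrightarrow> Y \<subseteq> E \<Longrightarrow> r X \<le> r Y" using m unfolding matroid_def by blast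
  have "direct_sum_split A (contract_rank r S) A1 E2"
    unfolding direct_sum_split_def
  proof (intro conjI allI impI A1ne E2ne)
    show "A1 \<union> E2 = A" "A1 \<inter> E2 = {}" using u d assms(3) \<open>S \<subseteq> E1\<close> A1_def by blast+
    fix X assume X: "X \<subseteq> A"
    have e1: "(X \<union> S) \<inter> E1 = (X \<inter> A1) \<union> S" using \<open>S \<subseteq> E1\<close> A1_def by blast
    have e2: "(X \<union> S) \<inter> E2 = X \<inter> E2" using \<open>S \<subseteq> E1\<close> d by blast
    have r1: "r (X \<union> S) = r ((X \<inter> A1) \<union> S) + r (X \<inter> E2)"
      using spl[of "X \<union> S"] X e1 e2 by auto
    have f1: "((X \<inter> E2) \<union> S) \<inter> E1 = S" "((X \<inter> E2) \<union> S) \<inter> E2 = X \<inter> E2" using \<open>S \<subseteq> E1\<close> d by blast+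
    have r2: "r ((X \<inter> E2) \<union> S) = r S + r (X \<inter> E2)"
      using spl[of "(X \<inter> E2) \<union> S"] X f1 u by auto
    have "(X \<inter> A1) \<union> S \<subseteq> E" using X assms(2,3) by blast
    hence r3: "r S \<le> r ((X \<inter> A1) \<union> S)" by (rule mono[rotated]) blast
    show "contract_rank r S X = contract_rank r S (X \<inter> A1) + contract_rank r S (X \<inter> E2)"
      unfolding contract_rank_def using r1 r2 r3 by simp
  qed
  thus False using conA unfolding connected_matroid_def by blast
qed

theorem lemma6p6:
  fixes E S :: "'a set" and r :: "'a set \<Rightarrow> nat" and P :: "'a set set"
  assumes "matroid E r"
    and "connected_matroid E r"
    and "S \<subseteq> E"
    and "connected_matroid S r"
    and "\<Union>P = E - S"
    and "\<forall>A\<in>P. \<forall>B\<in>P. A \<noteq> B \<longrightarrow> A \<inter> B = {}"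
    and "\<forall>A\<in>P. A \<noteq> {}"
    and "\<forall>X. X \<subseteq> E - S \<longrightarrow> contract_rank r S X = (\<Sum>A\<in>P. contract_rank r S (X \<inter> A))"
    and "\<forall>A\<in>P. connected_matroid A (contract_rank r S)"
    and "A \<in> P"
  shows "connected_matroid (A \<union> S) r"
proof -
  note m = assms(1)
  have AE: "A \<subseteq> E - S" using assms(5,10) by blast
  have conA: "connected_matroid A (contract_rank r S)" using assms(9,10) by blast
  have mono: "\<And>X Y. X \<subseteq> Y \<Longrightarrow> Y \<subseteq> E \<Longrightarrow> r X \<le> r Y" using m unfolding matroid_def by blast
  have sub: "\<And>X Y. X \<subseteq> E \<Longrightarrow> Y \<subseteq> E \<Longrightarrow> r (X \<union> Y) + r (X \<inter> Y) \<le> r X + r Y" using m unfolding matroid_def by blast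
  have "r {} \<le> card ({}::'a set)" using m unfolding matroid_def by blast
  hence r0: "r {} = 0" by simp
  have cr0: "contract_rank r S {} = 0" unfolding contract_rank_def by simp
  have crs: "contract_rank r S W = contract_rank r S (W \<inter> A) + contract_rank r S (W - A)"
    if W: "W \<subseteq> E - S" for W
  proof -
    have "contract_rank r S W = (\<Sum>B\<in>P. contract_rank r S (W \<inter> B))" using assms(8) W by blast
    also have "\<dots> = (\<Sum>B\<in>P. contract_rank r S (W \<inter> A \<inter> B) + contract_rank r S ((W - A) \<inter> B))"
    proof (rule sum.cong[OF refl])
      fix B assume B: "B \<in> P"
      show "contract_rank r S (W \<inter> B) = contract_rank r S (W \<inter> A \<inter> B) + contract_rank r S ((W - A) \<inter> B)"
      proof (cases "B = A")
        case True
        then have "(W - A) \<inter> B = {}" "W \<inter> A \<inter> B = W \<inter> B" by blast+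
        then show ?thesis using cr0 by simp
      next
        case False
        then have "A \<inter> B = {}" using assms(6,10) B by blast
        then have "(W - A) \<inter> B = W \<inter> B" "W \<inter> A \<inter> B = {}" by blast+
        then show ?thesis using cr0 by simp
      qed
    qed
    also have "\<dots> = (\<Sum>B\<in>P. contract_rank r S (W \<inter> A \<inter> B)) + (\<Sum>B\<in>P. contract_rank r S ((W - A) \<inter> B))"
      by (rule sum.distrib)
    also have "\<dots> = contract_rank r S (W \<inter> A) + contract_rank r S (W - A)"
    proof -
      have "W \<inter> A \<subseteq> E - S" "W - A \<subseteq> E - S" using W by blast+
      thus ?thesis using assms(8) by simp
    qed
    finally show ?thesis .
  qed
  show ?thesis
    unfolding connected_matroid_def
  proof
    assume "\<exists>E1 E2. direct_sum_split (A \<union> S) r E1 E2"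
    then obtain E1 E2 where sp0: "direct_sum_split (A \<union> S) r E1 E2" by blast
    have "S \<subseteq> E1 \<or> S \<subseteq> E2" using S_side[OF sp0 _ assms(4)] by simp
    hence "\<exists>E1 E2. direct_sum_split (A \<union> S) r E1 E2 \<and> S \<subseteq> E1"
      using sp0 split_sym[OF sp0] by blast
    then obtain E1 E2 where sp: "direct_sum_split (A \<union> S) r E1 E2" and SE1: "S \<subseteq> E1" by blast
    have E1S: "E1 = S" using E1_is_S[OF m assms(3) AE conA sp SE1] .
    have u: "E1 \<union> E2 = A \<union> S" and d: "E1 \<inter> E2 = {}" and E1ne: "E1 \<noteq> {}"
      and spl: "\<And>X. X \<subseteq> A \<union> S \<Longrightarrow> r X = r (X \<inter> E1) + r (X \<inter> E2)"
      using sp unfolding direct_sum_split_def by auto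
    have E2A: "E2 = A" using u d E1S AE by blast
    have Sne: "S \<noteq> {}" using E1ne E1S by simp
    have Ane: "A \<noteq> {}" using assms(7,10) by blast
    have rAS: "r (Y \<union> S) = r S + r Y" if "Y \<subseteq> A" for Y
    proof -
      have "(Y \<union> S) \<inter> E1 = S" "(Y \<union> S) \<inter> E2 = Y" using that E1S E2A AE by blast+
      thus ?thesis using spl[of "Y \<union> S"] that by auto
    qed
    have key: "r (X \<union> S) = r (X \<inter> A) + r ((X - A) \<union> S)" if X: "X \<subseteq> E" for X
    proof -
      define W where "W = X - S"
      have W: "W \<subseteq> E - S" using X W_def by blast
      have c: "contract_rank r S W = contract_rank r S (W \<inter> A) + contract_rank r S (W - A)" using crs W .
      have eq1: "W \<union> S = X \<union> S" "W \<inter> A = X \<inter> A" "(W - A) \<union> S = (X - A) \<union> S" using W_def AE by blast+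
      have "(X - A) \<union> S \<subseteq> E" "X \<union> S \<subseteq> E" using X assms(3) by blast+
      hence m1: "r S \<le> r ((X - A) \<union> S)" and m2: "r S \<le> r (X \<union> S)"
        by (auto intro: mono[rotated])
      have "r ((X \<inter> A) \<union> S) = r S + r (X \<inter> A)" using rAS by blast
      thus ?thesis using c eq1 m1 m2 unfolding contract_rank_def by simp
    qed
    have "direct_sum_split E r (E - A) A"
      unfolding direct_sum_split_def
    proof (intro conjI allI impI Ane)
      show "E - A \<union> A = E" "(E - A) \<inter> A = {}" using AE by blast+
      show "E - A \<noteq> {}" using Sne assms(3) AE by blast
      fix X assume X: "X \<subseteq> E"
      have i1: "X \<inter> (E - A) = X - A" using X by blast
      have le: "r X \<le> r (X \<inter> A) + r (X - A)"
      proof -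
        have "r ((X \<inter> A) \<union> (X - A)) + r ((X \<inter> A) \<inter> (X - A)) \<le> r (X \<inter> A) + r (X - A)"
          using X by (intro sub) auto
        moreover have "(X \<inter> A) \<union> (X - A) = X" "(X \<inter> A) \<inter> (X - A) = {}" by blast+
        ultimately show ?thesis using r0 by simp
      qed
      have ge: "r (X \<inter> A) + r (X - A) \<le> r X"
      proof -
        have "r (X \<union> ((X - A) \<union> S)) + r (X \<inter> ((X - A) \<union> S)) \<le> r X + r ((X - A) \<union> S)"
          using X assms(3) by (intro sub) auto
        moreover have "X \<union> ((X - A) \<union> S) = X \<union> S" "X \<inter> ((X - A) \<union> S) = X - A" using AE by blast+
        ultimately show ?thesis using key[OF X] by simp
      qed
      show "r X = r (X \<inter> (E - A)) + r (X \<inter> A)" using le ge i1 by simp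
    qed
    thus False using assms(2) unfolding connected_matroid_def by blast
  qed
qed

end
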